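(* Let $A,B,A',B'$ be qubit systems, with Alice holding $AA'$ and Bob holding $BB'$. Define the Bell states $|\psi_{0,1}\rangle=\frac{1}{\sqrt2}(|00\rangle\pm|11\rangle)$, $|\psi_{2,3}\rangle=\frac{1}{\sqrt2}(|01\rangle\pm|10\rangle)$, and write $\psi_i=|\psi_i\rangle\langle\psi_i|$. Define $|\chi_\pm\rangle=\frac12\big(\sqrt{2\pm\sqrt2}\,|00\rangle\pm\sqrt{2\mp\sqrt2}\,|11\rangle\big)$ and $\chi_\pm=|\chi_\pm\rangle\langle\chi_\pm|$. Let $p\in[0,1]$, $\kappa\in[0,1]$, $q_0=q_1=p/2$, $q_2=q_3=(1-p)/2$, and $\rho^{(0)}=\frac12(|00\rangle\langle00|+\psi_2)$, $\rho^{(1)}=\frac12(|11\rangle\langle11|+\psi_3)$, $\rho^{(2)}=\chi_+$, $\rho^{(3)}=\chi_-$ (states on $A'B'$). Let $$\rho_H=(1-\kappa)\sum_{i=0}^3 q_i\,\psi_{i,AB}\otimes\rho^{(i)}_{A'B'}+\kappa\,\frac{I}{16}.$$ Then there exists a unitary of the form $U=\sum_{i,j\in\{0,1\}}|ij\rangle\langle ij|_{AB}\otimes U_{ij,A'B'}$ with each $U_{ij}$ unitary on $A'B'$, such that $$\mathrm{Tr}_{A'B'}\big[U\rho_H U^\dagger\big]=(1-\kappa)\big(p\,\psi_0+(1-p)\,\psi_2\big)+\kappa\,\frac{I}{4}.$$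
   Context: $\{|0\rangle,|1\rangle\}$ denotes the computational basis of each qubit; $|ij\rangle=|i\rangle_A|j\rangle_B$. $I$ denotes the identity operator on the relevant space ($I/16$ is the maximally mixed state on $ABA'B'$, $I/4$ on $AB$). *)

theory Defs
  imports Complex_Main "Jordan_Normal_Form.Matrix" "Jordan_Normal_Form.Schur_Decomposition"
begin

text \<open>Two-qubit computational basis: index of |ij> is 2*i+j.
  The four-qubit space is ordered (AB) tensor (A'B'): index 4*a+b where a indexes AB and b indexes A'B'.\<close>

definition kron :: "complex mat \<Rightarrow> complex mat \<Rightarrow> complex mat" where
  "kron X Y = mat (dim_row X * dim_row Y) (dim_col X * dim_col Y)
     (\<lambda>(i,j). X $$ (i div dim_row Y, j div dim_col Y) * Y $$ (i mod dim_row Y, j mod dim_col Y))"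

definition ketbra :: "complex vec \<Rightarrow> complex mat" where
  "ketbra v = mat (dim_vec v) (dim_vec v) (\<lambda>(i,j). v $ i * cnj (v $ j))"

definition is_unitary :: "nat \<Rightarrow> complex mat \<Rightarrow> bool" where
  "is_unitary n U \<longleftrightarrow> U \<in> carrier_mat n n \<and> U * mat_adjoint U = 1\<^sub>m n \<and> mat_adjoint U * U = 1\<^sub>m n"

definition ptrace2 :: "complex mat \<Rightarrow> complex mat" where
  "ptrace2 M = mat 4 4 (\<lambda>(a,b). \<Sum>j<4. M $$ (4*a+j, 4*b+j))"

definition ket2 :: "nat \<Rightarrow> nat \<Rightarrow> complex vec" where
  "ket2 i j = unit_vec 4 (2*i+j)"

definition s2 :: complex where "s2 = complex_of_real (1 / sqrt 2)"

definition bell :: "nat \<Rightarrow> complex vec" where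
  "bell k = (if k = 0 then vec_of_list [s2, 0, 0, s2]
             else if k = 1 then vec_of_list [s2, 0, 0, -s2]
             else if k = 2 then vec_of_list [0, s2, s2, 0]
             else vec_of_list [0, s2, -s2, 0])"

definition psi :: "nat \<Rightarrow> complex mat" where "psi k = ketbra (bell k)"

definition chi_plus :: "complex vec" where
  "chi_plus = vec_of_list [complex_of_real (sqrt (2 + sqrt 2) / 2), 0, 0, complex_of_real (sqrt (2 - sqrt 2) / 2)]"

definition chi_minus :: "complex vec" where
  "chi_minus = vec_of_list [complex_of_real (sqrt (2 - sqrt 2) / 2), 0, 0, - complex_of_real (sqrt (2 + sqrt 2) / 2)]"

definition rho_sub :: "nat \<Rightarrow> complex mat" where
  "rho_sub k = (if k = 0 then (1/2) \<cdot>\<^sub>m (ketbra (ket2 0 0) + psi 2)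
                else if k = 1 then (1/2) \<cdot>\<^sub>m (ketbra (ket2 1 1) + psi 3)
                else if k = 2 then ketbra chi_plus
                else ketbra chi_minus)"

definition qcoef :: "real \<Rightarrow> nat \<Rightarrow> real" where
  "qcoef p k = (if k < 2 then p / 2 else (1 - p) / 2)"

definition rho_H :: "real \<Rightarrow> real \<Rightarrow> complex mat" where
  "rho_H p \<kappa> =
     complex_of_real (1 - \<kappa>) \<cdot>\<^sub>m
       (  complex_of_real (qcoef p 0) \<cdot>\<^sub>m kron (psi 0) (rho_sub 0)
        + complex_of_real (qcoef p 1) \<cdot>\<^sub>m kron (psi 1) (rho_sub 1)
        + complex_of_real (qcoef p 2) \<cdot>\<^sub>m kron (psi 2) (rho_sub 2)
        + complex_of_real (qcoef p 3) \<cdot>\<^sub>m kron (psi 3) (rho_sub 3))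
     + complex_of_real (\<kappa> / 16) \<cdot>\<^sub>m 1\<^sub>m 16"

definition ctrl_unitary :: "(nat \<Rightarrow> nat \<Rightarrow> complex mat) \<Rightarrow> complex mat" where
  "ctrl_unitary V =
       kron (ketbra (ket2 0 0)) (V 0 0) + kron (ketbra (ket2 0 1)) (V 0 1)
     + kron (ketbra (ket2 1 0)) (V 1 0) + kron (ketbra (ket2 1 1)) (V 1 1)"

end

theory Submission
  imports Defs
begin


lemma adj_carrier: "A \<in> carrier_mat n m \<Longrightarrow> mat_adjoint A \<in> carrier_mat m n"
  unfolding mat_adjoint_def by auto

lemma adj_index: "A \<in> carrier_mat n m \<Longrightarrow> i < m \<Longrightarrow> j < n \<Longrightarrow> mat_adjoint A $$ (i,j) = cnj (A $$ (j,i))"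
  unfolding mat_adjoint_def by (auto simp: mat_of_rows_index)

lemma s4: "(\<Sum>x<4::nat. f x) = f 0 + f 1 + f 2 + (f 3::'a::comm_monoid_add)"
  by (simp add: lessThan_nat_numeral add.commute add.left_commute)

lemma sum16_split: "(\<Sum>x<16::nat. f x) = (\<Sum>c<4::nat. \<Sum>x<4::nat. f (4*c+x))"
proof -
  have e: "(\<Sum>x<16. f x) = (\<Sum>x<4. f x) + (\<Sum>x<4. f (4+x)) + (\<Sum>x<4. f (8+x)) + (\<Sum>x<4. f (12+x))"
    by (simp add: lessThan_nat_numeral ac_simps)
  show ?thesis unfolding e by (subst (5) s4) simp
qed

lemma sum16: assumes "(a::nat) < 4" shows "(\<Sum>x<16. (if x div 4 = a then g x else (0::complex))) = (\<Sum>l<4. g (4*a+l))"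
proof -
  have blk: "(\<Sum>x<4. (if (4*c+x) div 4 = a then g (4*c+x) else 0)) = (if c = a then (\<Sum>x<4. g (4*a+x)) else 0)" for c
  proof -
    have "(\<Sum>x<4. (if (4*c+x) div 4 = a then g (4*c+x) else 0)) = (\<Sum>x<4::nat. (if c = a then g (4*c+x) else 0))"
      by (rule sum.cong) auto
    then show ?thesis by auto
  qed
  show ?thesis unfolding sum16_split blk using assms by (simp add: sum.delta)
qed

definition WW :: "(nat \<Rightarrow> nat \<Rightarrow> complex mat) \<Rightarrow> nat \<Rightarrow> complex mat" where
  "WW V a = V (a div 2) (a mod 2)"

lemma kron_carrier: "X \<in> carrier_mat a b \<Longrightarrow> Y \<in> carrier_mat c d \<Longrightarrow> kron X Y \<in> carrier_mat (a*c) (b*d)"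
  unfolding kron_def by auto

lemma kron_index: "X \<in> carrier_mat a b \<Longrightarrow> Y \<in> carrier_mat c d \<Longrightarrow> i < a*c \<Longrightarrow> j < b*d \<Longrightarrow>
   kron X Y $$ (i,j) = X $$ (i div c, j div d) * Y $$ (i mod c, j mod d)"
  unfolding kron_def by auto

lemma ketbra_carrier: "v \<in> carrier_vec n \<Longrightarrow> ketbra v \<in> carrier_mat n n"
  unfolding ketbra_def by auto

lemma ketbra_index: "v \<in> carrier_vec n \<Longrightarrow> i < n \<Longrightarrow> j < n \<Longrightarrow> ketbra v $$ (i,j) = v $ i * cnj (v $ j)"
  unfolding ketbra_def by auto

lemma ket2_carrier: "ket2 a b \<in> carrier_vec 4" unfolding ket2_def by auto

lemma kb_index: "i < 4 \<Longrightarrow> j < 4 \<Longrightarrow> ketbra (ket2 a b) $$ (i,j) = (if i = 2*a+b \<and> j = 2*a+b then 1 else 0)"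
  unfolding ket2_def ketbra_def unit_vec_def by auto

lemma U_carrier: "(\<And>i j. V i j \<in> carrier_mat 4 4) \<Longrightarrow> ctrl_unitary V \<in> carrier_mat 16 16"
  unfolding ctrl_unitary_def
  by (intro add_carrier_mat; rule kron_carrier[where a=4 and b=4 and c=4 and d=4, simplified], rule ketbra_carrier[OF ket2_carrier], auto)

lemma U_entry: assumes V: "\<And>i j. V i j \<in> carrier_mat 4 4" and ij: "i < 16" "j < 16"
  shows "ctrl_unitary V $$ (i,j) = (if i div 4 = j div 4 then WW V (i div 4) $$ (i mod 4, j mod 4) else 0)"
proof -
  have C: "\<And>a b. kron (ketbra (ket2 a b)) (V a b) \<in> carrier_mat 16 16"
    using kron_carrier[OF ketbra_carrier[OF ket2_carrier] V] by simp
  have D: "\<And>a b. dim_row (kron (ketbra (ket2 a b)) (V a b)) = 16" "\<And>a b. dim_col (kron (ketbra (ket2 a b)) (V a b)) = 16"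
    using C by auto
  have K: "\<And>a b. kron (ketbra (ket2 a b)) (V a b) $$ (i,j) = ketbra (ket2 a b) $$ (i div 4, j div 4) * V a b $$ (i mod 4, j mod 4)"
    using kron_index[OF ketbra_carrier[OF ket2_carrier] V] ij by simp
  have idx: "i div 4 < 4" "j div 4 < 4" "i mod 4 < 4" "j mod 4 < 4" using ij by auto
  have e: "ctrl_unitary V $$ (i,j) = (if i div 4 = 0 \<and> j div 4 = 0 then 1 else 0) * V 0 0 $$ (i mod 4, j mod 4)
     + (if i div 4 = 1 \<and> j div 4 = 1 then 1 else 0) * V 0 1 $$ (i mod 4, j mod 4)
     + (if i div 4 = 2 \<and> j div 4 = 2 then 1 else 0) * V 1 0 $$ (i mod 4, j mod 4)
     + (if i div 4 = 3 \<and> j div 4 = 3 then 1 else 0) * V 1 1 $$ (i mod 4, j mod 4)"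
    unfolding ctrl_unitary_def using ij idx
    by (simp add: K kb_index D)
  have sel: "\<And>x y::nat. x \<in> {0,1,2,3} \<Longrightarrow> (if x = 0 \<and> y = 0 then 1 else 0) * V 0 0 $$ (k, l)
     + (if x = 1 \<and> y = 1 then 1 else 0) * V 0 1 $$ (k, l)
     + (if x = 2 \<and> y = 2 then 1 else 0) * V 1 0 $$ (k, l)
     + (if x = 3 \<and> y = 3 then 1 else 0) * V 1 1 $$ (k, l) = (if x = y then WW V x $$ (k, l) else 0)" for k l
    unfolding WW_def by (elim insertE emptyE) simp_all
  have "i div 4 \<in> {0,1,2,3}" using idx by auto
  from sel[OF this] show ?thesis unfolding e by blast
qed

lemma mult_index: "A \<in> carrier_mat n k \<Longrightarrow> B \<in> carrier_mat k m \<Longrightarrow> i < n \<Longrightarrow> j < m \<Longrightarrow>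
  (A * B) $$ (i,j) = (\<Sum>x<k. A $$ (i,x) * B $$ (x,j))"
  by (auto simp: scalar_prod_def atLeast0LessThan intro!: sum.cong)

lemma UM_entry: assumes V: "\<And>i j. V i j \<in> carrier_mat 4 4" and M: "M \<in> carrier_mat 16 16"
  and a: "a < 4" and k: "k < 4" and y: "y < 16"
  shows "(ctrl_unitary V * M) $$ (4*a+k, y) = (\<Sum>l<4. WW V a $$ (k,l) * M $$ (4*a+l, y))"
proof -
  have r: "4*a+k < 16" using a k by auto
  have "(ctrl_unitary V * M) $$ (4*a+k, y) = (\<Sum>x<16. ctrl_unitary V $$ (4*a+k,x) * M $$ (x,y))"
    by (rule mult_index[OF U_carrier[OF V] M r y])
  also have "\<dots> = (\<Sum>x<16. if x div 4 = a then WW V a $$ (k, x mod 4) * M $$ (x,y) else 0)"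
    by (rule sum.cong) (use r k in \<open>auto simp: U_entry[OF V]\<close>)
  also have "\<dots> = (\<Sum>l<4. WW V a $$ (k,l) * M $$ (4*a+l, y))"
    by (subst sum16[OF a]) (rule sum.cong, auto)
  finally show ?thesis .
qed

lemma ptrace_entry: assumes V: "\<And>i j. V i j \<in> carrier_mat 4 4" and M: "M \<in> carrier_mat 16 16"
  and a: "a < 4" and b: "b < 4"
  shows "ptrace2 (ctrl_unitary V * M * mat_adjoint (ctrl_unitary V)) $$ (a,b) =
    (\<Sum>k<4. \<Sum>l<4. \<Sum>m<4. WW V a $$ (k,l) * M $$ (4*a+l, 4*b+m) * cnj (WW V b $$ (k,m)))"
proof -
  let ?U = "ctrl_unitary V"
  have UC: "?U \<in> carrier_mat 16 16" by (rule U_carrier[OF V])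
  have AC: "mat_adjoint ?U \<in> carrier_mat 16 16" by (rule adj_carrier[OF UC])
  have UMC: "?U * M \<in> carrier_mat 16 16" using UC M by auto
  have "(?U * M * mat_adjoint ?U) $$ (4*a+k, 4*b+k) =
     (\<Sum>l<4. \<Sum>m<4. WW V a $$ (k,l) * M $$ (4*a+l, 4*b+m) * cnj (WW V b $$ (k,m)))" if k: "k < 4" for k
  proof -
    have r: "4*a+k < 16" "4*b+k < 16" using a b k by auto
    have "(?U * M * mat_adjoint ?U) $$ (4*a+k, 4*b+k) = (\<Sum>y<16. (?U * M) $$ (4*a+k,y) * mat_adjoint ?U $$ (y, 4*b+k))"
      by (rule mult_index[OF UMC AC r])
    also have "\<dots> = (\<Sum>y<16. if y div 4 = b then (\<Sum>l<4. WW V a $$ (k,l) * M $$ (4*a+l, y)) * cnj (WW V b $$ (k, y mod 4)) else 0)"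
      by (rule sum.cong) (use r k in \<open>auto simp: U_entry[OF V] UM_entry[OF V M a k] adj_index[OF UC]\<close>)
    also have "\<dots> = (\<Sum>m<4. (\<Sum>l<4. WW V a $$ (k,l) * M $$ (4*a+l, 4*b+m)) * cnj (WW V b $$ (k, m)))"
      by (subst sum16[OF b]) (rule sum.cong, auto)
    also have "\<dots> = (\<Sum>l<4. \<Sum>m<4. WW V a $$ (k,l) * M $$ (4*a+l, 4*b+m) * cnj (WW V b $$ (k,m)))"
      unfolding sum_distrib_right by (rule sum.swap)
    finally show ?thesis .
  qed
  then show ?thesis unfolding ptrace2_def using a b by simp
qed

lemma U_mult: assumes V: "\<And>i j. V i j \<in> carrier_mat 4 4" and V': "\<And>i j. V' i j \<in> carrier_mat 4 4"
  shows "ctrl_unitary V * ctrl_unitary V' = ctrl_unitary (\<lambda>i j. V i j * V' i j)"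
proof -
  have VV: "\<And>i j. V i j * V' i j \<in> carrier_mat 4 4" using V V' by (meson mult_carrier_mat)
  have C: "ctrl_unitary V \<in> carrier_mat 16 16" "ctrl_unitary V' \<in> carrier_mat 16 16"
     "ctrl_unitary (\<lambda>i j. V i j * V' i j) \<in> carrier_mat 16 16"
    using U_carrier V V' VV by auto
  show ?thesis
  proof (rule eq_matI)
    fix i j assume i: "i < dim_row (ctrl_unitary (\<lambda>i j. V i j * V' i j))" and j: "j < dim_col (ctrl_unitary (\<lambda>i j. V i j * V' i j))"
    then have i: "i < 16" and j: "j < 16" using C by auto
    define a k where "a = i div 4" and "k = i mod 4"
    have ie: "i = 4*a+k" and a: "a < 4" and k: "k < 4" using i unfolding a_def k_def by auto
    have "(ctrl_unitary V * ctrl_unitary V') $$ (4*a+k, j) = (\<Sum>l<4. WW V a $$ (k,l) * ctrl_unitary V' $$ (4*a+l, j))"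
      by (rule UM_entry[OF V C(2) a k j])
    also have "\<dots> = (\<Sum>l<4. WW V a $$ (k,l) * (if a = j div 4 then WW V' a $$ (l, j mod 4) else 0))"
      by (rule sum.cong) (use a j in \<open>auto simp: U_entry[OF V']\<close>)
    also have "\<dots> = (if a = j div 4 then (WW V a * WW V' a) $$ (k, j mod 4) else 0)"
      using k j by (auto simp: WW_def mult_index[OF V V'])
    also have "\<dots> = ctrl_unitary (\<lambda>i j. V i j * V' i j) $$ (4*a+k, j)"
      using a k j by (auto simp: U_entry[OF VV] WW_def)
    finally show "(ctrl_unitary V * ctrl_unitary V') $$ (i, j) = ctrl_unitary (\<lambda>i j. V i j * V' i j) $$ (i, j)"
      using ie by simp
  qed (use C in auto)
qed

lemma U_adj: assumes V: "\<And>i j. V i j \<in> carrier_mat 4 4"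
  shows "mat_adjoint (ctrl_unitary V) = ctrl_unitary (\<lambda>i j. mat_adjoint (V i j))"
proof -
  have VA: "\<And>i j. mat_adjoint (V i j) \<in> carrier_mat 4 4" using V adj_carrier by blast
  have C: "ctrl_unitary V \<in> carrier_mat 16 16" "ctrl_unitary (\<lambda>i j. mat_adjoint (V i j)) \<in> carrier_mat 16 16"
    using U_carrier V VA by auto
  have AC: "mat_adjoint (ctrl_unitary V) \<in> carrier_mat 16 16" using adj_carrier[OF C(1)] .
  show ?thesis
  proof (rule eq_matI)
    fix i j assume "i < dim_row (ctrl_unitary (\<lambda>i j. mat_adjoint (V i j)))" "j < dim_col (ctrl_unitary (\<lambda>i j. mat_adjoint (V i j)))"
    then have i: "i < 16" and j: "j < 16" using C by auto
    show "mat_adjoint (ctrl_unitary V) $$ (i, j) = ctrl_unitary (\<lambda>i j. mat_adjoint (V i j)) $$ (i, j)"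
      using i j by (auto simp: adj_index[OF C(1)] U_entry[OF V] U_entry[OF VA] WW_def adj_index[OF V])
  qed (use C AC in auto)
qed

lemma U_one: "ctrl_unitary (\<lambda>i j. 1\<^sub>m 4) = 1\<^sub>m 16"
proof -
  have C: "ctrl_unitary (\<lambda>i j. 1\<^sub>m 4) \<in> carrier_mat 16 16" by (rule U_carrier) auto
  show ?thesis
  proof (rule eq_matI)
    fix i j assume "i < dim_row (1\<^sub>m 16 :: complex mat)" "j < dim_col (1\<^sub>m 16 :: complex mat)"
    then have i: "i < 16" and j: "j < 16" by auto
    have "(i div 4 = j div 4 \<and> i mod 4 = j mod 4) = (i = j)" by (metis div_mod_decomp)
    then show "ctrl_unitary (\<lambda>i j. 1\<^sub>m 4) $$ (i, j) = 1\<^sub>m 16 $$ (i, j)"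
      using i j by (auto simp: U_entry WW_def)
  qed (use C in auto)
qed

lemma U_unitary: assumes V: "\<And>i j. V i j \<in> carrier_mat 4 4" and VU: "\<And>i j. is_unitary 4 (V i j)"
  shows "is_unitary 16 (ctrl_unitary V)"
proof -
  have VA: "\<And>i j. mat_adjoint (V i j) \<in> carrier_mat 4 4" using V adj_carrier by blast
  have 1: "(\<lambda>i j. V i j * mat_adjoint (V i j)) = (\<lambda>i j. 1\<^sub>m 4)" "(\<lambda>i j. mat_adjoint (V i j) * V i j) = (\<lambda>i j. 1\<^sub>m 4)"
    using VU unfolding is_unitary_def by auto
  show ?thesis unfolding is_unitary_def
    using U_carrier[OF V] U_mult[OF V VA] U_mult[OF VA V] U_adj[OF V] 1 U_one by simp
qed


definition W0 :: "complex mat" where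
  "W0 = mat 4 4 (\<lambda>(i,j). if (i=0\<and>j=0) \<or> (i=1\<and>j=2) \<or> (i=2\<and>j=1) then 1 else if i=3\<and>j=3 then -1 else 0)"
definition W1 :: "complex mat" where
  "W1 = mat 4 4 (\<lambda>(i,j). if (i=0 \<or> i=3) \<and> (j=0 \<or> j=3) then (if i=3 \<and> j=3 then -s2 else s2) else if i=j then 1 else 0)"
definition Vc :: "nat \<Rightarrow> nat \<Rightarrow> complex mat" where
  "Vc i j = (if i=0 \<and> j=0 then W0 else if i=0 \<and> j=1 then W1 else 1\<^sub>m 4)"

lemma Vc_carrier: "Vc i j \<in> carrier_mat 4 4" unfolding Vc_def W0_def W1_def by auto

lemma adj_dims[simp]: "dim_row (mat_adjoint A) = dim_col A" "dim_col (mat_adjoint A) = dim_row A"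
  unfolding mat_adjoint_def by auto

lemma s2_sq: "s2 * s2 = 1/2"
proof -
  have r: "1/sqrt 2 * (1/sqrt 2) = (1/2::real)" by simp
  have "s2 * s2 = complex_of_real (1/2)" unfolding s2_def by (simp only: of_real_mult[symmetric] r)
  then show ?thesis by simp
qed

lemma cnj_s2: "cnj s2 = s2" unfolding s2_def by simp

lemma unit4: assumes W: "W \<in> carrier_mat 4 4" and E: "\<And>i j. i < 4 \<Longrightarrow> j < 4 \<Longrightarrow> (\<Sum>x<4. W $$ (i,x) * cnj (W $$ (j,x))) = (if i = j then 1 else 0)"
  and E2: "\<And>i j. i < 4 \<Longrightarrow> j < 4 \<Longrightarrow> (\<Sum>x<4. cnj (W $$ (x,i)) * W $$ (x,j)) = (if i = j then 1 else 0)"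
  shows "is_unitary 4 W"
  unfolding is_unitary_def
proof (intro conjI)
  have A: "mat_adjoint W \<in> carrier_mat 4 4" using adj_carrier[OF W] .
  have dW: "dim_row W = 4" "dim_col W = 4" using W by auto
  show "W * mat_adjoint W = 1\<^sub>m 4"
    by (rule eq_matI) (use W A in \<open>auto simp del: index_mult_mat(1) simp add: dW mult_index[OF W A] adj_index[OF W] E\<close>)
  show "mat_adjoint W * W = 1\<^sub>m 4"
    by (rule eq_matI) (use W A in \<open>auto simp del: index_mult_mat(1) simp add: dW mult_index[OF A W] adj_index[OF W] E2\<close>)
qed (fact W)

lemma less4: "(i::nat) < 4 \<Longrightarrow> i \<in> {0,1,2,3}" by auto

lemma W0_unit: "is_unitary 4 W0"
  apply (rule unit4)
  apply (simp add: W0_def)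
  apply (drule less4)+ apply (elim insertE emptyE; simp add: W0_def s4)
  apply (drule less4)+ apply (elim insertE emptyE; simp add: W0_def s4)
  done

lemma W1_unit: "is_unitary 4 W1"
  apply (rule unit4)
  apply (simp add: W1_def)
  apply (drule less4)+ apply (elim insertE emptyE; simp add: W1_def s4 s2_sq cnj_s2)
  apply (drule less4)+ apply (elim insertE emptyE; simp add: W1_def s4 s2_sq cnj_s2)
  done

lemma adj_one: "mat_adjoint (1\<^sub>m n :: complex mat) = 1\<^sub>m n"
  by (rule eq_matI) (auto simp: adj_index[of _ n n] adj_carrier[of _ n n])

lemma one_unit: "is_unitary n (1\<^sub>m n)"
  unfolding is_unitary_def adj_one by simp

lemma Vc_unit: "is_unitary 4 (Vc i j)"
  unfolding Vc_def using W0_unit W1_unit one_unit by auto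

definition TT :: "nat \<Rightarrow> nat \<Rightarrow> complex mat \<Rightarrow> complex" where
  "TT a b X = (\<Sum>k<4. \<Sum>l<4. \<Sum>m<4. WW Vc a $$ (k,l) * X $$ (l,m) * cnj (WW Vc b $$ (k,m)))"

definition ca :: complex where "ca = complex_of_real (sqrt (2 + sqrt 2) / 2)"
definition cb :: complex where "cb = complex_of_real (sqrt (2 - sqrt 2) / 2)"

lemma chi_eqs: "chi_plus = vec_of_list [ca, 0, 0, cb]" "chi_minus = vec_of_list [cb, 0, 0, -ca]"
  unfolding chi_plus_def chi_minus_def ca_def cb_def by simp_all

lemma cnj_cab: "cnj ca = ca" "cnj cb = cb" unfolding ca_def cb_def by simp_all

lemma rel_real: "sqrt (2 + sqrt 2) / 2 * (sqrt (2 + sqrt 2) / 2) = 1/2 + (1 / sqrt 2) / 2"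
  "sqrt (2 - sqrt 2) / 2 * (sqrt (2 - sqrt 2) / 2) = 1/2 - (1 / sqrt 2) / 2"
  "sqrt (2 + sqrt 2) / 2 * (sqrt (2 - sqrt 2) / 2) = (1 / sqrt 2) / 2"
proof -
  have s: "sqrt 2 < 2" by (simp add: real_less_lsqrt)
  have i: "1 / sqrt 2 = sqrt 2 / 2" by (simp add: field_simps)
  show "sqrt (2 + sqrt 2) / 2 * (sqrt (2 + sqrt 2) / 2) = 1/2 + (1 / sqrt 2) / 2"
    unfolding i by (simp add: field_simps)
  show "sqrt (2 - sqrt 2) / 2 * (sqrt (2 - sqrt 2) / 2) = 1/2 - (1 / sqrt 2) / 2"
    unfolding i using s by (simp add: field_simps)
  have "sqrt (2 + sqrt 2) * sqrt (2 - sqrt 2) = sqrt ((2 + sqrt 2) * (2 - sqrt 2))"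
    by (simp add: real_sqrt_mult)
  also have "(2 + sqrt 2) * (2 - sqrt 2) = 2" by (simp add: algebra_simps)
  finally show "sqrt (2 + sqrt 2) / 2 * (sqrt (2 - sqrt 2) / 2) = (1 / sqrt 2) / 2"
    unfolding i by simp
qed

lemma rels: "ca * ca = 1/2 + s2/2" "cb * cb = 1/2 - s2/2" "ca * cb = s2/2"
proof -
  show "ca * ca = 1/2 + s2/2" unfolding ca_def s2_def
    by (simp only: of_real_mult[symmetric] rel_real) simp
  show "cb * cb = 1/2 - s2/2" unfolding cb_def s2_def
    by (simp only: of_real_mult[symmetric] rel_real) simp
  show "ca * cb = s2/2" unfolding ca_def cb_def s2_def
    by (simp only: of_real_mult[symmetric] rel_real) simp
qed

lemma relsx: "s2 * (s2 * y) = y/2" "ca * (ca * y) = y/2 + s2*y/2" "cb * (cb * y) = y/2 - s2*y/2"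
   "ca * (cb * y) = s2*y/2" "cb * (ca * y) = s2*y/2" "cb * ca = s2/2"
  using s2_sq rels by (simp_all only: mult.assoc[symmetric] mult.commute[of cb ca]; simp add: field_simps)+

lemmas RR = s2_sq rels relsx


definition Rm :: "nat \<Rightarrow> complex mat" where "Rm i = (if i < 4 then rho_sub i else 1\<^sub>m 4)"

lemma TTv0: "TT 0 0 (Rm 0) = 1"
  unfolding TT_def Rm_def
  by (simp add: s4 WW_def Vc_def W0_def W1_def rho_sub_def chi_eqs ketbra_def cnj_s2 cnj_cab vec_index_vCons psi_def bell_def ket2_def;
      simp add: algebra_simps RR add_divide_distrib diff_divide_distrib)

lemma TTv1: "TT 0 0 (Rm 1) = 1"
  unfolding TT_def Rm_def
  by (simp add: s4 WW_def Vc_def W0_def W1_def rho_sub_def chi_eqs ketbra_def cnj_s2 cnj_cab vec_index_vCons psi_def bell_def ket2_def;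
      simp add: algebra_simps RR add_divide_distrib diff_divide_distrib)

lemma TTv2: "TT 0 0 (Rm 2) = 1"
  unfolding TT_def Rm_def
  by (simp add: s4 WW_def Vc_def W0_def W1_def rho_sub_def chi_eqs ketbra_def cnj_s2 cnj_cab vec_index_vCons psi_def bell_def ket2_def;
      simp add: algebra_simps RR add_divide_distrib diff_divide_distrib)

lemma TTv3: "TT 0 0 (Rm 3) = 1"
  unfolding TT_def Rm_def
  by (simp add: s4 WW_def Vc_def W0_def W1_def rho_sub_def chi_eqs ketbra_def cnj_s2 cnj_cab vec_index_vCons psi_def bell_def ket2_def;
      simp add: algebra_simps RR add_divide_distrib diff_divide_distrib)

lemma TTv4: "TT 0 0 (Rm 4) = 4"
  unfolding TT_def Rm_def
  by (simp add: s4 WW_def Vc_def W0_def W1_def rho_sub_def chi_eqs ketbra_def cnj_s2 cnj_cab vec_index_vCons psi_def bell_def ket2_def;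
      simp add: algebra_simps RR add_divide_distrib diff_divide_distrib)

lemma TTv5: "TT 1 1 (Rm 0) = 1"
  unfolding TT_def Rm_def
  by (simp add: s4 WW_def Vc_def W0_def W1_def rho_sub_def chi_eqs ketbra_def cnj_s2 cnj_cab vec_index_vCons psi_def bell_def ket2_def;
      simp add: algebra_simps RR add_divide_distrib diff_divide_distrib)

lemma TTv6: "TT 1 1 (Rm 1) = 1"
  unfolding TT_def Rm_def
  by (simp add: s4 WW_def Vc_def W0_def W1_def rho_sub_def chi_eqs ketbra_def cnj_s2 cnj_cab vec_index_vCons psi_def bell_def ket2_def;
      simp add: algebra_simps RR add_divide_distrib diff_divide_distrib)

lemma TTv7: "TT 1 1 (Rm 2) = 1"
  unfolding TT_def Rm_def
  by (simp add: s4 WW_def Vc_def W0_def W1_def rho_sub_def chi_eqs ketbra_def cnj_s2 cnj_cab vec_index_vCons psi_def bell_def ket2_def;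
      simp add: algebra_simps RR add_divide_distrib diff_divide_distrib)

lemma TTv8: "TT 1 1 (Rm 3) = 1"
  unfolding TT_def Rm_def
  by (simp add: s4 WW_def Vc_def W0_def W1_def rho_sub_def chi_eqs ketbra_def cnj_s2 cnj_cab vec_index_vCons psi_def bell_def ket2_def;
      simp add: algebra_simps RR add_divide_distrib diff_divide_distrib)

lemma TTv9: "TT 1 1 (Rm 4) = 4"
  unfolding TT_def Rm_def
  by (simp add: s4 WW_def Vc_def W0_def W1_def rho_sub_def chi_eqs ketbra_def cnj_s2 cnj_cab vec_index_vCons psi_def bell_def ket2_def;
      simp add: algebra_simps RR add_divide_distrib diff_divide_distrib)

lemma TTv10: "TT 2 2 (Rm 0) = 1"
  unfolding TT_def Rm_def
  by (simp add: s4 WW_def Vc_def W0_def W1_def rho_sub_def chi_eqs ketbra_def cnj_s2 cnj_cab vec_index_vCons psi_def bell_def ket2_def;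
      simp add: algebra_simps RR add_divide_distrib diff_divide_distrib)

lemma TTv11: "TT 2 2 (Rm 1) = 1"
  unfolding TT_def Rm_def
  by (simp add: s4 WW_def Vc_def W0_def W1_def rho_sub_def chi_eqs ketbra_def cnj_s2 cnj_cab vec_index_vCons psi_def bell_def ket2_def;
      simp add: algebra_simps RR add_divide_distrib diff_divide_distrib)

lemma TTv12: "TT 2 2 (Rm 2) = 1"
  unfolding TT_def Rm_def
  by (simp add: s4 WW_def Vc_def W0_def W1_def rho_sub_def chi_eqs ketbra_def cnj_s2 cnj_cab vec_index_vCons psi_def bell_def ket2_def;
      simp add: algebra_simps RR add_divide_distrib diff_divide_distrib)

lemma TTv13: "TT 2 2 (Rm 3) = 1"
  unfolding TT_def Rm_def
  by (simp add: s4 WW_def Vc_def W0_def W1_def rho_sub_def chi_eqs ketbra_def cnj_s2 cnj_cab vec_index_vCons psi_def bell_def ket2_def;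
      simp add: algebra_simps RR add_divide_distrib diff_divide_distrib)

lemma TTv14: "TT 2 2 (Rm 4) = 4"
  unfolding TT_def Rm_def
  by (simp add: s4 WW_def Vc_def W0_def W1_def rho_sub_def chi_eqs ketbra_def cnj_s2 cnj_cab vec_index_vCons psi_def bell_def ket2_def;
      simp add: algebra_simps RR add_divide_distrib diff_divide_distrib)

lemma TTv15: "TT 3 3 (Rm 0) = 1"
  unfolding TT_def Rm_def
  by (simp add: s4 WW_def Vc_def W0_def W1_def rho_sub_def chi_eqs ketbra_def cnj_s2 cnj_cab vec_index_vCons psi_def bell_def ket2_def;
      simp add: algebra_simps RR add_divide_distrib diff_divide_distrib)

lemma TTv16: "TT 3 3 (Rm 1) = 1"
  unfolding TT_def Rm_def
  by (simp add: s4 WW_def Vc_def W0_def W1_def rho_sub_def chi_eqs ketbra_def cnj_s2 cnj_cab vec_index_vCons psi_def bell_def ket2_def;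
      simp add: algebra_simps RR add_divide_distrib diff_divide_distrib)

lemma TTv17: "TT 3 3 (Rm 2) = 1"
  unfolding TT_def Rm_def
  by (simp add: s4 WW_def Vc_def W0_def W1_def rho_sub_def chi_eqs ketbra_def cnj_s2 cnj_cab vec_index_vCons psi_def bell_def ket2_def;
      simp add: algebra_simps RR add_divide_distrib diff_divide_distrib)

lemma TTv18: "TT 3 3 (Rm 3) = 1"
  unfolding TT_def Rm_def
  by (simp add: s4 WW_def Vc_def W0_def W1_def rho_sub_def chi_eqs ketbra_def cnj_s2 cnj_cab vec_index_vCons psi_def bell_def ket2_def;
      simp add: algebra_simps RR add_divide_distrib diff_divide_distrib)

lemma TTv19: "TT 3 3 (Rm 4) = 4"
  unfolding TT_def Rm_def
  by (simp add: s4 WW_def Vc_def W0_def W1_def rho_sub_def chi_eqs ketbra_def cnj_s2 cnj_cab vec_index_vCons psi_def bell_def ket2_def;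
      simp add: algebra_simps RR add_divide_distrib diff_divide_distrib)

lemma TTv20: "TT 0 3 (Rm 0) = 1"
  unfolding TT_def Rm_def
  by (simp add: s4 WW_def Vc_def W0_def W1_def rho_sub_def chi_eqs ketbra_def cnj_s2 cnj_cab vec_index_vCons psi_def bell_def ket2_def;
      simp add: algebra_simps RR add_divide_distrib diff_divide_distrib)

lemma TTv21: "TT 0 3 (Rm 1) = -1"
  unfolding TT_def Rm_def
  by (simp add: s4 WW_def Vc_def W0_def W1_def rho_sub_def chi_eqs ketbra_def cnj_s2 cnj_cab vec_index_vCons psi_def bell_def ket2_def;
      simp add: algebra_simps RR add_divide_distrib diff_divide_distrib)

lemma TTv22: "TT 3 0 (Rm 0) = 1"
  unfolding TT_def Rm_def
  by (simp add: s4 WW_def Vc_def W0_def W1_def rho_sub_def chi_eqs ketbra_def cnj_s2 cnj_cab vec_index_vCons psi_def bell_def ket2_def;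
      simp add: algebra_simps RR add_divide_distrib diff_divide_distrib)

lemma TTv23: "TT 3 0 (Rm 1) = -1"
  unfolding TT_def Rm_def
  by (simp add: s4 WW_def Vc_def W0_def W1_def rho_sub_def chi_eqs ketbra_def cnj_s2 cnj_cab vec_index_vCons psi_def bell_def ket2_def;
      simp add: algebra_simps RR add_divide_distrib diff_divide_distrib)

lemma TTv24: "TT 1 2 (Rm 2) = 1"
  unfolding TT_def Rm_def
  by (simp add: s4 WW_def Vc_def W0_def W1_def rho_sub_def chi_eqs ketbra_def cnj_s2 cnj_cab vec_index_vCons psi_def bell_def ket2_def;
      simp add: algebra_simps RR add_divide_distrib diff_divide_distrib)

lemma TTv25: "TT 1 2 (Rm 3) = -1"
  unfolding TT_def Rm_def
  by (simp add: s4 WW_def Vc_def W0_def W1_def rho_sub_def chi_eqs ketbra_def cnj_s2 cnj_cab vec_index_vCons psi_def bell_def ket2_def;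
      simp add: algebra_simps RR add_divide_distrib diff_divide_distrib)

lemma TTv26: "TT 2 1 (Rm 2) = 1"
  unfolding TT_def Rm_def
  by (simp add: s4 WW_def Vc_def W0_def W1_def rho_sub_def chi_eqs ketbra_def cnj_s2 cnj_cab vec_index_vCons psi_def bell_def ket2_def;
      simp add: algebra_simps RR add_divide_distrib diff_divide_distrib)

lemma TTv27: "TT 2 1 (Rm 3) = -1"
  unfolding TT_def Rm_def
  by (simp add: s4 WW_def Vc_def W0_def W1_def rho_sub_def chi_eqs ketbra_def cnj_s2 cnj_cab vec_index_vCons psi_def bell_def ket2_def;
      simp add: algebra_simps RR add_divide_distrib diff_divide_distrib)

lemmas TTvals = TTv0 TTv1 TTv2 TTv3 TTv4 TTv5 TTv6 TTv7 TTv8 TTv9 TTv10 TTv11 TTv12 TTv13 TTv14 TTv15 TTv16 TTv17 TTv18 TTv19 TTv20 TTv21 TTv22 TTv23 TTv24 TTv25 TTv26 TTv27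

definition cc :: "real \<Rightarrow> real \<Rightarrow> nat \<Rightarrow> nat \<Rightarrow> nat \<Rightarrow> complex" where
  "cc p \<kappa> a b i = (if i < 4 then complex_of_real (1 - \<kappa>) * complex_of_real (qcoef p i) * psi i $$ (a,b)
      else (if a = b then complex_of_real (\<kappa>/16) else 0))"

lemma bell_carrier: "bell k \<in> carrier_vec 4" unfolding bell_def carrier_vec_def by simp
lemma psi_carrier: "psi k \<in> carrier_mat 4 4" unfolding psi_def using ketbra_carrier[OF bell_carrier] .
lemma rho_sub_carrier: "rho_sub k \<in> carrier_mat 4 4"
  unfolding rho_sub_def using psi_carrier ketbra_carrier[OF ket2_carrier]
  by (auto simp: chi_plus_def chi_minus_def ketbra_def)

lemma rho_entry: assumes "a < 4" "b < 4" "l < 4" "m < 4"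
  shows "rho_H p \<kappa> $$ (4*a+l, 4*b+m) = (\<Sum>i<5. cc p \<kappa> a b i * Rm i $$ (l,m))"
proof -
  have K: "kron (psi k) (rho_sub k) $$ (4*a+l, 4*b+m) = psi k $$ (a,b) * rho_sub k $$ (l,m)" for k
    using kron_index[OF psi_carrier rho_sub_carrier, of "4*a+l" "4*b+m"] assms by simp
  have KC: "kron (psi k) (rho_sub k) \<in> carrier_mat 16 16" for k
    using kron_carrier[OF psi_carrier rho_sub_carrier] by simp
  have D: "dim_row (kron (psi k) (rho_sub k)) = 16" "dim_col (kron (psi k) (rho_sub k)) = 16" for k
    using KC by auto
  have r: "4*a+l < 16" "4*b+m < 16" using assms by auto
  have e: "(4*a+l = 4*b+m) = (a = b \<and> l = m)" using assms by presburger
  show ?thesis unfolding rho_H_def cc_def Rm_def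
    using r assms by (simp add: D K lessThan_nat_numeral e; simp add: algebra_simps)
qed

lemma lin_sum: "(\<Sum>k<4::nat. \<Sum>l<4::nat. \<Sum>m<4::nat. w k l * (\<Sum>i<5::nat. c i * r i l m) * z k m) =
   (\<Sum>i<5. c i * (\<Sum>k<4. \<Sum>l<4. \<Sum>m<4. w k l * r i l m * (z k m::complex)))"
proof -
  have "(\<Sum>k<4::nat. \<Sum>l<4::nat. \<Sum>m<4::nat. w k l * (\<Sum>i<5::nat. c i * r i l m) * z k m) =
     (\<Sum>k<4::nat. \<Sum>l<4::nat. \<Sum>m<4::nat. \<Sum>i<5::nat. c i * (w k l * r i l m * z k m))"
    by (simp add: sum_distrib_left sum_distrib_right mult_ac)
  also have "\<dots> = (\<Sum>i<5::nat. \<Sum>k<4::nat. \<Sum>l<4::nat. \<Sum>m<4::nat. c i * (w k l * r i l m * z k m))"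
    by (simp only: sum.swap[of _ "{..<4::nat}" "{..<5::nat}"])
  also have "\<dots> = (\<Sum>i<5. c i * (\<Sum>k<4. \<Sum>l<4. \<Sum>m<4. w k l * r i l m * (z k m::complex)))"
    by (simp add: sum_distrib_left)
  finally show ?thesis .
qed

lemma main_entry: assumes a: "a < 4" and b: "b < 4"
  shows "ptrace2 (ctrl_unitary Vc * rho_H p \<kappa> * mat_adjoint (ctrl_unitary Vc)) $$ (a,b) =
     (\<Sum>i<5. cc p \<kappa> a b i * TT a b (Rm i))"
proof -
  have RC: "rho_H p \<kappa> \<in> carrier_mat 16 16"
    unfolding rho_H_def using kron_carrier[OF psi_carrier rho_sub_carrier] by simp
  have "ptrace2 (ctrl_unitary Vc * rho_H p \<kappa> * mat_adjoint (ctrl_unitary Vc)) $$ (a,b) =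
    (\<Sum>k<4. \<Sum>l<4. \<Sum>m<4. WW Vc a $$ (k,l) * (\<Sum>i<5. cc p \<kappa> a b i * Rm i $$ (l,m)) * cnj (WW Vc b $$ (k,m)))"
    unfolding ptrace_entry[OF Vc_carrier RC a b]
    by (intro sum.cong refl) (simp add: rho_entry a b)
  also have "\<dots> = (\<Sum>i<5. cc p \<kappa> a b i * TT a b (Rm i))"
    unfolding lin_sum TT_def ..
  finally show ?thesis .
qed

lemma ptrace_dims: "dim_row (ptrace2 M) = 4" "dim_col (ptrace2 M) = 4" unfolding ptrace2_def by auto

lemmas TTvals2 = TTvals TTvals[unfolded One_nat_def]

lemma fe00: "(\<Sum>i<5. cc p \<kappa> 0 0 i * TT 0 0 (Rm i)) =
    complex_of_real (1 - \<kappa>) * (complex_of_real p * psi 0 $$ (0,0) + complex_of_real (1 - p) * psi 2 $$ (0,0))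
             + complex_of_real (\<kappa> / 4) * (if (0::nat) = 0 then 1 else 0)"
  by (simp add: lessThan_nat_numeral cc_def TTvals2 psi_def bell_def ketbra_def vec_index_vCons qcoef_def cnj_s2;
      simp add: algebra_simps RR add_divide_distrib diff_divide_distrib)

lemma fe01: "(\<Sum>i<5. cc p \<kappa> 0 1 i * TT 0 1 (Rm i)) =
    complex_of_real (1 - \<kappa>) * (complex_of_real p * psi 0 $$ (0,1) + complex_of_real (1 - p) * psi 2 $$ (0,1))
             + complex_of_real (\<kappa> / 4) * (if (0::nat) = 1 then 1 else 0)"
  by (simp add: lessThan_nat_numeral cc_def TTvals2 psi_def bell_def ketbra_def vec_index_vCons qcoef_def cnj_s2;
      simp add: algebra_simps RR add_divide_distrib diff_divide_distrib)

lemma fe02: "(\<Sum>i<5. cc p \<kappa> 0 2 i * TT 0 2 (Rm i)) =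
    complex_of_real (1 - \<kappa>) * (complex_of_real p * psi 0 $$ (0,2) + complex_of_real (1 - p) * psi 2 $$ (0,2))
             + complex_of_real (\<kappa> / 4) * (if (0::nat) = 2 then 1 else 0)"
  by (simp add: lessThan_nat_numeral cc_def TTvals2 psi_def bell_def ketbra_def vec_index_vCons qcoef_def cnj_s2;
      simp add: algebra_simps RR add_divide_distrib diff_divide_distrib)

lemma fe03: "(\<Sum>i<5. cc p \<kappa> 0 3 i * TT 0 3 (Rm i)) =
    complex_of_real (1 - \<kappa>) * (complex_of_real p * psi 0 $$ (0,3) + complex_of_real (1 - p) * psi 2 $$ (0,3))
             + complex_of_real (\<kappa> / 4) * (if (0::nat) = 3 then 1 else 0)"
  by (simp add: lessThan_nat_numeral cc_def TTvals2 psi_def bell_def ketbra_def vec_index_vCons qcoef_def cnj_s2;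
      simp add: algebra_simps RR add_divide_distrib diff_divide_distrib)

lemma fe10: "(\<Sum>i<5. cc p \<kappa> 1 0 i * TT 1 0 (Rm i)) =
    complex_of_real (1 - \<kappa>) * (complex_of_real p * psi 0 $$ (1,0) + complex_of_real (1 - p) * psi 2 $$ (1,0))
             + complex_of_real (\<kappa> / 4) * (if (1::nat) = 0 then 1 else 0)"
  by (simp add: lessThan_nat_numeral cc_def TTvals2 psi_def bell_def ketbra_def vec_index_vCons qcoef_def cnj_s2;
      simp add: algebra_simps RR add_divide_distrib diff_divide_distrib)

lemma fe11: "(\<Sum>i<5. cc p \<kappa> 1 1 i * TT 1 1 (Rm i)) =
    complex_of_real (1 - \<kappa>) * (complex_of_real p * psi 0 $$ (1,1) + complex_of_real (1 - p) * psi 2 $$ (1,1))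
             + complex_of_real (\<kappa> / 4) * (if (1::nat) = 1 then 1 else 0)"
  by (simp add: lessThan_nat_numeral cc_def TTvals2 psi_def bell_def ketbra_def vec_index_vCons qcoef_def cnj_s2;
      simp add: algebra_simps RR add_divide_distrib diff_divide_distrib)

lemma fe12: "(\<Sum>i<5. cc p \<kappa> 1 2 i * TT 1 2 (Rm i)) =
    complex_of_real (1 - \<kappa>) * (complex_of_real p * psi 0 $$ (1,2) + complex_of_real (1 - p) * psi 2 $$ (1,2))
             + complex_of_real (\<kappa> / 4) * (if (1::nat) = 2 then 1 else 0)"
  by (simp add: lessThan_nat_numeral cc_def TTvals2 psi_def bell_def ketbra_def vec_index_vCons qcoef_def cnj_s2;
      simp add: algebra_simps RR add_divide_distrib diff_divide_distrib)

lemma fe13: "(\<Sum>i<5. cc p \<kappa> 1 3 i * TT 1 3 (Rm i)) =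
    complex_of_real (1 - \<kappa>) * (complex_of_real p * psi 0 $$ (1,3) + complex_of_real (1 - p) * psi 2 $$ (1,3))
             + complex_of_real (\<kappa> / 4) * (if (1::nat) = 3 then 1 else 0)"
  by (simp add: lessThan_nat_numeral cc_def TTvals2 psi_def bell_def ketbra_def vec_index_vCons qcoef_def cnj_s2;
      simp add: algebra_simps RR add_divide_distrib diff_divide_distrib)

lemma fe20: "(\<Sum>i<5. cc p \<kappa> 2 0 i * TT 2 0 (Rm i)) =
    complex_of_real (1 - \<kappa>) * (complex_of_real p * psi 0 $$ (2,0) + complex_of_real (1 - p) * psi 2 $$ (2,0))
             + complex_of_real (\<kappa> / 4) * (if (2::nat) = 0 then 1 else 0)"
  by (simp add: lessThan_nat_numeral cc_def TTvals2 psi_def bell_def ketbra_def vec_index_vCons qcoef_def cnj_s2;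
      simp add: algebra_simps RR add_divide_distrib diff_divide_distrib)

lemma fe21: "(\<Sum>i<5. cc p \<kappa> 2 1 i * TT 2 1 (Rm i)) =
    complex_of_real (1 - \<kappa>) * (complex_of_real p * psi 0 $$ (2,1) + complex_of_real (1 - p) * psi 2 $$ (2,1))
             + complex_of_real (\<kappa> / 4) * (if (2::nat) = 1 then 1 else 0)"
  by (simp add: lessThan_nat_numeral cc_def TTvals2 psi_def bell_def ketbra_def vec_index_vCons qcoef_def cnj_s2;
      simp add: algebra_simps RR add_divide_distrib diff_divide_distrib)

lemma fe22: "(\<Sum>i<5. cc p \<kappa> 2 2 i * TT 2 2 (Rm i)) =
    complex_of_real (1 - \<kappa>) * (complex_of_real p * psi 0 $$ (2,2) + complex_of_real (1 - p) * psi 2 $$ (2,2))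
             + complex_of_real (\<kappa> / 4) * (if (2::nat) = 2 then 1 else 0)"
  by (simp add: lessThan_nat_numeral cc_def TTvals2 psi_def bell_def ketbra_def vec_index_vCons qcoef_def cnj_s2;
      simp add: algebra_simps RR add_divide_distrib diff_divide_distrib)

lemma fe23: "(\<Sum>i<5. cc p \<kappa> 2 3 i * TT 2 3 (Rm i)) =
    complex_of_real (1 - \<kappa>) * (complex_of_real p * psi 0 $$ (2,3) + complex_of_real (1 - p) * psi 2 $$ (2,3))
             + complex_of_real (\<kappa> / 4) * (if (2::nat) = 3 then 1 else 0)"
  by (simp add: lessThan_nat_numeral cc_def TTvals2 psi_def bell_def ketbra_def vec_index_vCons qcoef_def cnj_s2;
      simp add: algebra_simps RR add_divide_distrib diff_divide_distrib)

lemma fe30: "(\<Sum>i<5. cc p \<kappa> 3 0 i * TT 3 0 (Rm i)) =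
    complex_of_real (1 - \<kappa>) * (complex_of_real p * psi 0 $$ (3,0) + complex_of_real (1 - p) * psi 2 $$ (3,0))
             + complex_of_real (\<kappa> / 4) * (if (3::nat) = 0 then 1 else 0)"
  by (simp add: lessThan_nat_numeral cc_def TTvals2 psi_def bell_def ketbra_def vec_index_vCons qcoef_def cnj_s2;
      simp add: algebra_simps RR add_divide_distrib diff_divide_distrib)

lemma fe31: "(\<Sum>i<5. cc p \<kappa> 3 1 i * TT 3 1 (Rm i)) =
    complex_of_real (1 - \<kappa>) * (complex_of_real p * psi 0 $$ (3,1) + complex_of_real (1 - p) * psi 2 $$ (3,1))
             + complex_of_real (\<kappa> / 4) * (if (3::nat) = 1 then 1 else 0)"
  by (simp add: lessThan_nat_numeral cc_def TTvals2 psi_def bell_def ketbra_def vec_index_vCons qcoef_def cnj_s2;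
      simp add: algebra_simps RR add_divide_distrib diff_divide_distrib)

lemma fe32: "(\<Sum>i<5. cc p \<kappa> 3 2 i * TT 3 2 (Rm i)) =
    complex_of_real (1 - \<kappa>) * (complex_of_real p * psi 0 $$ (3,2) + complex_of_real (1 - p) * psi 2 $$ (3,2))
             + complex_of_real (\<kappa> / 4) * (if (3::nat) = 2 then 1 else 0)"
  by (simp add: lessThan_nat_numeral cc_def TTvals2 psi_def bell_def ketbra_def vec_index_vCons qcoef_def cnj_s2;
      simp add: algebra_simps RR add_divide_distrib diff_divide_distrib)

lemma fe33: "(\<Sum>i<5. cc p \<kappa> 3 3 i * TT 3 3 (Rm i)) =
    complex_of_real (1 - \<kappa>) * (complex_of_real p * psi 0 $$ (3,3) + complex_of_real (1 - p) * psi 2 $$ (3,3))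
             + complex_of_real (\<kappa> / 4) * (if (3::nat) = 3 then 1 else 0)"
  by (simp add: lessThan_nat_numeral cc_def TTvals2 psi_def bell_def ketbra_def vec_index_vCons qcoef_def cnj_s2;
      simp add: algebra_simps RR add_divide_distrib diff_divide_distrib)

lemma final_entry: assumes "a \<in> {0,1,2,3::nat}" "b \<in> {0,1,2,3::nat}"
  shows "(\<Sum>i<5. cc p \<kappa> a b i * TT a b (Rm i)) =
    complex_of_real (1 - \<kappa>) * (complex_of_real p * psi 0 $$ (a,b) + complex_of_real (1 - p) * psi 2 $$ (a,b))
             + complex_of_real (\<kappa> / 4) * (if a = b then 1 else 0)"
  using assms
  by (elim insertE emptyE) (simp_all only: fe00 fe01 fe02 fe03 fe10 fe11 fe12 fe13 fe20 fe21 fe22 fe23 fe30 fe31 fe32 fe33)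

theorem mainTheorem1:
  fixes p \<kappa> :: real
  assumes "0 \<le> p" "p \<le> 1" "0 \<le> \<kappa>" "\<kappa> \<le> 1"
  shows "\<exists>V U. (\<forall>i<2. \<forall>j<2. is_unitary 4 (V i j)) \<and> U = ctrl_unitary V \<and> is_unitary 16 U \<and>
           ptrace2 (U * rho_H p \<kappa> * mat_adjoint U) =
             complex_of_real (1 - \<kappa>) \<cdot>\<^sub>m (complex_of_real p \<cdot>\<^sub>m psi 0 + complex_of_real (1 - p) \<cdot>\<^sub>m psi 2)
             + complex_of_real (\<kappa> / 4) \<cdot>\<^sub>m 1\<^sub>m 4"
proof (intro exI conjI allI impI)
  show "is_unitary 4 (Vc i j)" for i j by (rule Vc_unit)
  show "ctrl_unitary Vc = ctrl_unitary Vc" ..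
  show "is_unitary 16 (ctrl_unitary Vc)" by (rule U_unitary[OF Vc_carrier Vc_unit])
  show "ptrace2 (ctrl_unitary Vc * rho_H p \<kappa> * mat_adjoint (ctrl_unitary Vc)) =
             complex_of_real (1 - \<kappa>) \<cdot>\<^sub>m (complex_of_real p \<cdot>\<^sub>m psi 0 + complex_of_real (1 - p) \<cdot>\<^sub>m psi 2)
             + complex_of_real (\<kappa> / 4) \<cdot>\<^sub>m 1\<^sub>m 4"
  proof (rule eq_matI)
    fix a b assume "a < dim_row (complex_of_real (1 - \<kappa>) \<cdot>\<^sub>m (complex_of_real p \<cdot>\<^sub>m psi 0 + complex_of_real (1 - p) \<cdot>\<^sub>m psi 2)
             + complex_of_real (\<kappa> / 4) \<cdot>\<^sub>m 1\<^sub>m 4)"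
      "b < dim_col (complex_of_real (1 - \<kappa>) \<cdot>\<^sub>m (complex_of_real p \<cdot>\<^sub>m psi 0 + complex_of_real (1 - p) \<cdot>\<^sub>m psi 2)
             + complex_of_real (\<kappa> / 4) \<cdot>\<^sub>m 1\<^sub>m 4)"
    then have a: "a < 4" and b: "b < 4" by auto
    have P: "dim_row (psi k) = 4" "dim_col (psi k) = 4" for k using psi_carrier by auto
    show "ptrace2 (ctrl_unitary Vc * rho_H p \<kappa> * mat_adjoint (ctrl_unitary Vc)) $$ (a, b) =
      (complex_of_real (1 - \<kappa>) \<cdot>\<^sub>m (complex_of_real p \<cdot>\<^sub>m psi 0 + complex_of_real (1 - p) \<cdot>\<^sub>m psi 2)
             + complex_of_real (\<kappa> / 4) \<cdot>\<^sub>m 1\<^sub>m 4) $$ (a, b)"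
      unfolding main_entry[OF a b] final_entry[OF less4[OF a] less4[OF b]]
      using a b by (simp add: P)
  qed (auto simp: ptrace_dims psi_carrier)
qed
end
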